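(* Let $G=(V,E)$ be a (finite or infinite) graph and $\psi:(0,+\infty)\to\mathbb R$ a $C^1$ concave function with $\psi'(1)=0$. Let $\sigma\in\mathbb R$ be a constant and $c:[0,+\infty)\to\mathbb R$ a continuous function such that either ($c\ge0$ and $\sigma\le1$) or ($c\le0$ and $\sigma\ge1$). Suppose $u:V\times[0,\infty)\to(0,\infty)$ is a positive solution of $\partial_tu=\Delta u+c(t)u^\sigma$ on $V$. Then, at every vertex and every time, $$\mathcal L(-u\Delta^\psi u)\ge 2u\Gamma_2^\psi(u)+c\,u^\sigma\Delta^\psi u,$$ where $\mathcal L=\Delta-\partial_t$.
   Context: Graphs: $G=(V,E)$ is a connected, locally finite graph; each edge $xy$ carries a weight $w_{xy}>0$ (possibly asymmetric), and $\mu:V\to(0,\infty)$ is a vertex measure; $y\sim x$ means $xy\in E$. Laplacian: $\Delta f(x)=\frac{1}{\mu(x)}\sum_{y\sim x}w_{xy}(f(y)-f(x))$. For $f:V\to(0,\infty)$: $\Delta^\psi f(x)=\Delta\big[\psi\big(\tfrac{f}{f(x)}\big)\big](x)$; $(\Omega^\psi f)(x)=\Delta\big[\psi'\big(\tfrac{f}{f(x)}\big)\tfrac{f}{f(x)}\big(\tfrac{\Delta f}{f}-\tfrac{\Delta f(x)}{f(x)}\big)\big](x)$; $2\Gamma_2^\psi(f)=\Omega^\psi f+\frac{\Delta f\,\Delta^\psi f}{f}-\frac{\Delta(f\Delta^\psi f)}{f}$. A positive solution is continuously differentiable in $t$, and all operators are applied to $u(\cdot,t)$ at each fixed time. *)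

theory Defs
  imports "HOL-Analysis.Analysis"
begin

definition weighted_graph :: "('v \<Rightarrow> 'v \<Rightarrow> bool) \<Rightarrow> ('v \<Rightarrow> 'v \<Rightarrow> real) \<Rightarrow> ('v \<Rightarrow> real) \<Rightarrow> bool" where
  "weighted_graph E w mu \<longleftrightarrow>
     (\<forall>x y. E x y \<longrightarrow> E y x) \<and> (\<forall>x. \<not> E x x) \<and>
     (\<forall>x. finite {y. E x y}) \<and> (\<forall>x y. E\<^sup>*\<^sup>* x y) \<and>
     (\<forall>x y. E x y \<longrightarrow> w x y > 0) \<and> (\<forall>x. mu x > 0)"

definition Lap :: "('v \<Rightarrow> 'v \<Rightarrow> bool) \<Rightarrow> ('v \<Rightarrow> 'v \<Rightarrow> real) \<Rightarrow> ('v \<Rightarrow> real) \<Rightarrow> ('v \<Rightarrow> real) \<Rightarrow> 'v \<Rightarrow> real" where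
  "Lap E w mu f x = (1 / mu x) * (\<Sum>y\<in>{y. E x y}. w x y * (f y - f x))"

definition LapPsi :: "('v \<Rightarrow> 'v \<Rightarrow> bool) \<Rightarrow> ('v \<Rightarrow> 'v \<Rightarrow> real) \<Rightarrow> ('v \<Rightarrow> real) \<Rightarrow> (real \<Rightarrow> real) \<Rightarrow> ('v \<Rightarrow> real) \<Rightarrow> 'v \<Rightarrow> real" where
  "LapPsi E w mu \<psi> f x = Lap E w mu (\<lambda>y. \<psi> (f y / f x)) x"

definition OmegaPsi :: "('v \<Rightarrow> 'v \<Rightarrow> bool) \<Rightarrow> ('v \<Rightarrow> 'v \<Rightarrow> real) \<Rightarrow> ('v \<Rightarrow> real) \<Rightarrow> (real \<Rightarrow> real) \<Rightarrow> ('v \<Rightarrow> real) \<Rightarrow> 'v \<Rightarrow> real" where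
  "OmegaPsi E w mu \<psi> f x = Lap E w mu
     (\<lambda>y. deriv \<psi> (f y / f x) * (f y / f x) *
          (Lap E w mu f y / f y - Lap E w mu f x / f x)) x"

text \<open>Gamma2Psi f x is Gamma_2^psi(f)(x), i.e. one half of the right-hand side defining 2 Gamma_2^psi.\<close>
definition Gamma2Psi :: "('v \<Rightarrow> 'v \<Rightarrow> bool) \<Rightarrow> ('v \<Rightarrow> 'v \<Rightarrow> real) \<Rightarrow> ('v \<Rightarrow> real) \<Rightarrow> (real \<Rightarrow> real) \<Rightarrow> ('v \<Rightarrow> real) \<Rightarrow> 'v \<Rightarrow> real" where
  "Gamma2Psi E w mu \<psi> f x =
     (OmegaPsi E w mu \<psi> f x
      + Lap E w mu f x * LapPsi E w mu \<psi> f x / f x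
      - Lap E w mu (\<lambda>y. f y * LapPsi E w mu \<psi> f y) x / f x) / 2"

end

theory Submission
  imports Defs
begin

lemma Lap_neg: "Lap E w mu (\<lambda>y. - f y) x = - Lap E w mu f x"
proof -
  have "(\<Sum>y\<in>{y. E x y}. w x y * (- f y - - f x)) = (\<Sum>y\<in>{y. E x y}. - (w x y * (f y - f x)))"
    by (rule sum.cong) (auto simp: algebra_simps)
  then show ?thesis unfolding Lap_def by (simp add: sum_negf)
qed

lemma fin:
  fixes U L0 LL Dx C Om Sd :: real
  assumes "U > 0" "U * Om \<le> U * Sd"
  shows "- LL - (- ((Dx + C) * L0 + U * Sd)) \<ge> 2 * U * ((Om + Dx * L0 / U - LL / U) / 2) + C * L0"
proof -
  have "2 * U * ((Om + Dx * L0 / U - LL / U) / 2) = U * Om + Dx * L0 - LL"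
    using assms(1) by (simp add: field_simps)
  then show ?thesis using assms(2) by (simp add: algebra_simps)
qed

lemma psi_sign:
  fixes \<psi> :: "real \<Rightarrow> real"
  assumes psi_diff: "\<forall>s>0. \<psi> differentiable (at s)"
    and psi_concave: "concave_on {0<..} \<psi>"
    and psi_crit: "deriv \<psi> 1 = 0" and r: "r > 0"
  shows "deriv \<psi> r * (1 - r) \<ge> 0"
proof -
  have cv: "convex_on {0<..} (\<lambda>x. - \<psi> x)" using psi_concave by (simp add: concave_on_def)
  have D: "((\<lambda>x. - \<psi> x) has_field_derivative - deriv \<psi> s) (at s within {0<..})" if "s > 0" for s
  proof -
    have "(\<psi> has_field_derivative deriv \<psi> s) (at s)"
      using psi_diff that by (simp add: DERIV_deriv_iff_real_differentiable)
    then have "((\<lambda>x. - \<psi> x) has_field_derivative - deriv \<psi> s) (at s)"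
      by (rule DERIV_minus)
    then show ?thesis by (rule has_field_derivative_at_within)
  qed
  have conn: "connected ({0<..}::real set)" by (simp add: connected_Ioi)
  have int: "\<And>s::real. s > 0 \<Longrightarrow> s \<in> interior {0<..}" by (simp add: interior_open)
  have c1: "- \<psi> 1 - - \<psi> r \<ge> - deriv \<psi> r * (1 - r)"
    by (rule convex_on_imp_above_tangent[OF cv conn int[OF r] _ D[OF r]]) simp
  have c2: "- \<psi> r - - \<psi> 1 \<ge> - deriv \<psi> 1 * (r - 1)"
    by (rule convex_on_imp_above_tangent[OF cv conn int _ D]) (use r in simp_all)
  show ?thesis using c1 c2 psi_crit by simp
qed

lemma key:
  fixes p a b c \<sigma> :: real
  assumes "p * (1 - b/a) \<ge> 0" "a > 0" "b > 0"
    and cs: "(c \<ge> 0 \<and> \<sigma> \<le> 1) \<or> (c \<le> 0 \<and> \<sigma> \<ge> 1)"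
  shows "p * (b/a) * c * (b powr \<sigma> / b - a powr \<sigma> / a) \<ge> 0"
proof -
  have e: "x powr \<sigma> / x = x powr (\<sigma> - 1)" if "x > 0" for x :: real
    using that by (simp add: powr_diff)
  have "p * (a - b) = a * (p * (1 - b/a))" using assms(2) by (simp add: field_simps)
  then have s: "p * (a - b) \<ge> 0" using assms(1,2) by (metis mult_nonneg_nonneg less_imp_le)
  have m1: "(b powr (\<sigma>-1) - a powr (\<sigma>-1)) * (a - b) \<ge> 0" if "\<sigma> \<le> 1"
  proof (cases "b \<le> a")
    case True
    then have "a powr (\<sigma>-1) \<le> b powr (\<sigma>-1)" using that assms by (intro powr_mono2') auto
    then show ?thesis using True by simp
  next
    case False
    then have "b powr (\<sigma>-1) \<le> a powr (\<sigma>-1)" using that assms by (intro powr_mono2') auto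
    then show ?thesis using False by (simp add: mult_nonpos_nonpos)
  qed
  have m2: "(b powr (\<sigma>-1) - a powr (\<sigma>-1)) * (a - b) \<le> 0" if "\<sigma> \<ge> 1"
  proof (cases "b \<le> a")
    case True
    then have "b powr (\<sigma>-1) \<le> a powr (\<sigma>-1)" using that assms by (intro powr_mono2) auto
    then show ?thesis using True by (simp add: mult_nonpos_nonneg)
  next
    case False
    then have "a powr (\<sigma>-1) \<le> b powr (\<sigma>-1)" using that assms by (intro powr_mono2) auto
    then show ?thesis using False by (simp add: mult_nonneg_nonpos)
  qed
  have "p * (b powr (\<sigma>-1) - a powr (\<sigma>-1)) * c \<ge> 0"
  proof (cases "a = b")
    case True then show ?thesis by simp
  next
    case False
    have "p * (b powr (\<sigma>-1) - a powr (\<sigma>-1)) * c * (a-b)^2 = (p*(a-b)) * ((b powr (\<sigma>-1) - a powr (\<sigma>-1)) * (a-b)) * c"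
      by (simp add: power2_eq_square algebra_simps)
    also have "\<dots> \<ge> 0"
    proof (cases "c \<ge> 0 \<and> \<sigma> \<le> 1")
      case True then show ?thesis using m1 s by simp
    next
      case False
      then have "c \<le> 0" "\<sigma> \<ge> 1" using cs by auto
      then show ?thesis using m2 s
        by (metis mult_nonneg_nonpos mult_nonpos_nonpos)
    qed
    finally have "0 \<le> p * (b powr (\<sigma>-1) - a powr (\<sigma>-1)) * c * (a-b)^2" .
    moreover have "(a-b)^2 > 0" using False by simp
    ultimately show ?thesis by (simp add: zero_le_mult_iff)
  qed
  then have "(b/a) * (p * (b powr (\<sigma>-1) - a powr (\<sigma>-1)) * c) \<ge> 0" using assms by simp
  then show ?thesis using e assms by (simp add: algebra_simps)
qed
theorem mainTheorem11:
  fixes E :: "'v \<Rightarrow> 'v \<Rightarrow> bool" and w :: "'v \<Rightarrow> 'v \<Rightarrow> real" and mu :: "'v \<Rightarrow> real"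
    and \<psi> :: "real \<Rightarrow> real" and \<sigma> :: real and c :: "real \<Rightarrow> real"
    and u :: "'v \<Rightarrow> real \<Rightarrow> real"
  assumes G: "weighted_graph E w mu"
    and psi_diff: "\<forall>s>0. \<psi> differentiable (at s)"
    and psi_C1: "continuous_on {0<..} (deriv \<psi>)"
    and psi_concave: "concave_on {0<..} \<psi>"
    and psi_crit: "deriv \<psi> 1 = 0"
    and c_cont: "continuous_on {0..} c"
    and c_sign: "((\<forall>t\<ge>0. c t \<ge> 0) \<and> \<sigma> \<le> 1) \<or> ((\<forall>t\<ge>0. c t \<le> 0) \<and> \<sigma> \<ge> 1)"
    and u_pos: "\<forall>x t. t \<ge> 0 \<longrightarrow> u x t > 0"
    and u_eq: "\<forall>x t. t \<ge> 0 \<longrightarrow>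
        ((\<lambda>s. u x s) has_real_derivative
           (Lap E w mu (\<lambda>y. u y t) x + c t * u x t powr \<sigma>)) (at t within {0..})"
    and u_C1: "\<forall>x. continuous_on {0..}
        (\<lambda>t. Lap E w mu (\<lambda>y. u y t) x + c t * u x t powr \<sigma>)"
    and t: "t \<ge> 0"
  shows "\<exists>D. ((\<lambda>s. - u x s * LapPsi E w mu \<psi> (\<lambda>y. u y s) x) has_real_derivative D)
              (at t within {0..})
         \<and> Lap E w mu (\<lambda>y. - u y t * LapPsi E w mu \<psi> (\<lambda>z. u z t) y) x - D
           \<ge> 2 * u x t * Gamma2Psi E w mu \<psi> (\<lambda>y. u y t) x
             + c t * u x t powr \<sigma> * LapPsi E w mu \<psi> (\<lambda>y. u y t) x"
proof -
  let ?N = "{y. E x y}"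
  have finN: "finite ?N" using G by (simp add: weighted_graph_def)
  have mupos: "mu x > 0" using G by (simp add: weighted_graph_def)
  have wpos: "\<And>y. y \<in> ?N \<Longrightarrow> w x y > 0" using G by (simp add: weighted_graph_def)
  define a where "a y = Lap E w mu (\<lambda>z. u z t) y + c t * u y t powr \<sigma>" for y
  define dg where "dg y = deriv \<psi> (u y t / u x t) * ((a y * u x t - u y t * a x) / (u x t * u x t))" for y
  define h where "h y = deriv \<psi> (u y t / u x t) * (u y t / u x t) *
          (Lap E w mu (\<lambda>z. u z t) y / u y t - Lap E w mu (\<lambda>z. u z t) x / u x t)" for y
  have uxt: "u x t > 0" using u_pos t by auto
  have uyt: "\<And>y. u y t > 0" using u_pos t by auto
  have du: "\<And>y. ((\<lambda>s. u y s) has_real_derivative a y) (at t within {0..})"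
    using u_eq t by (simp add: a_def)
  have dg: "((\<lambda>s. \<psi> (u y s / u x s)) has_real_derivative dg y) (at t within {0..})" for y
  proof -
    have "(\<psi> has_real_derivative deriv \<psi> (u y t / u x t)) (at (u y t / u x t))"
      using psi_diff uxt uyt[of y] by (simp add: DERIV_deriv_iff_real_differentiable)
    moreover have "((\<lambda>s. u y s / u x s) has_real_derivative (a y * u x t - u y t * a x) / (u x t * u x t)) (at t within {0..})"
      using DERIV_divide[OF du[of y] du[of x]] uxt by simp
    ultimately show ?thesis unfolding dg_def by (rule DERIV_chain2)
  qed
  define S where "S s = (\<Sum>y\<in>?N. w x y * (\<psi> (u y s / u x s) - \<psi> (u x s / u x s)))" for s
  have dS: "(S has_real_derivative (\<Sum>y\<in>?N. w x y * (dg y - dg x))) (at t within {0..})"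
    unfolding S_def by (intro DERIV_sum DERIV_cmult DERIV_diff dg)
  define D where "D = - (a x * ((1 / mu x) * S t) + u x t * ((1 / mu x) * (\<Sum>y\<in>?N. w x y * (dg y - dg x))))"
  have LP: "\<And>s. LapPsi E w mu \<psi> (\<lambda>y. u y s) x = (1 / mu x) * S s"
    by (simp add: LapPsi_def Lap_def S_def)
  have dF: "((\<lambda>s. - u x s * LapPsi E w mu \<psi> (\<lambda>y. u y s) x) has_real_derivative D) (at t within {0..})"
    unfolding LP
    by (rule DERIV_cong[OF DERIV_mult[OF DERIV_minus[OF du[of x]] DERIV_cmult[OF dS, of "1 / mu x"]]]) (simp add: D_def algebra_simps)
  have dgx: "dg x = 0" by (simp add: dg_def)
  have hx: "h x = 0" by (simp add: h_def)
  have tm: "w x y * h y \<le> w x y * dg y" if "y \<in> ?N" for y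
  proof -
    have eq: "dg y - h y = deriv \<psi> (u y t / u x t) * (u y t / u x t) * c t *
        (u y t powr \<sigma> / u y t - u x t powr \<sigma> / u x t)"
      using uxt uyt[of y] by (simp add: dg_def h_def a_def field_simps)
    have ps: "deriv \<psi> (u y t / u x t) * (1 - u y t / u x t) \<ge> 0"
      using psi_sign[OF psi_diff psi_concave psi_crit] uxt uyt[of y] by simp
    have cs: "(c t \<ge> 0 \<and> \<sigma> \<le> 1) \<or> (c t \<le> 0 \<and> \<sigma> \<ge> 1)" using c_sign t by auto
    have "dg y - h y \<ge> 0" unfolding eq by (rule key[OF ps uxt uyt[of y] cs])
    then show ?thesis using wpos[OF that] by (simp add: mult_left_mono)
  qed
  have sumle: "(\<Sum>y\<in>?N. w x y * (h y - h x)) \<le> (\<Sum>y\<in>?N. w x y * (dg y - dg x))"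
    unfolding hx dgx apply simp apply (rule sum_mono) using tm by simp
  have Om: "OmegaPsi E w mu \<psi> (\<lambda>y. u y t) x = (1 / mu x) * (\<Sum>y\<in>?N. w x y * (h y - h x))"
    by (simp add: OmegaPsi_def Lap_def h_def)
  have Lneg: "Lap E w mu (\<lambda>y. - u y t * LapPsi E w mu \<psi> (\<lambda>z. u z t) y) x
      = - Lap E w mu (\<lambda>y. u y t * LapPsi E w mu \<psi> (\<lambda>z. u z t) y) x"
    using Lap_neg[of E w mu "\<lambda>y. u y t * LapPsi E w mu \<psi> (\<lambda>z. u z t) y" x] by simp
  have mono: "u x t * ((1 / mu x) * (\<Sum>y\<in>?N. w x y * (h y - h x)))
      \<le> u x t * ((1 / mu x) * (\<Sum>y\<in>?N. w x y * (dg y - dg x)))"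
    using sumle uxt mupos by (intro mult_left_mono) (auto simp: divide_simps)
  have "Lap E w mu (\<lambda>y. - u y t * LapPsi E w mu \<psi> (\<lambda>z. u z t) y) x - D
           \<ge> 2 * u x t * Gamma2Psi E w mu \<psi> (\<lambda>y. u y t) x
             + c t * u x t powr \<sigma> * LapPsi E w mu \<psi> (\<lambda>y. u y t) x"
    unfolding Lneg Gamma2Psi_def Om D_def LP[of t] a_def
    by (rule fin[OF uxt mono])
  with dF show ?thesis by blast
qed

end
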